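(* For real $\kappa\ge0$ and $U$ define \begin{align*} A(\kappa,U)&=2(1+\kappa^2)-U(\kappa^2-1),\\ B(\kappa,U)&=\kappa^2U^2+4U+2(1+\kappa^2),\\ C(\kappa,U)&=-\kappa^2U^3+2U^2+(2\kappa^2+6)U. \end{align*} Then $A(\kappa,U)=0$ holds if and only if $\kappa\neq1$ and $U=U_c(\kappa):=\frac{2(\kappa^2+1)}{\kappa^2-1}$, and $A(\kappa,U)=B(\kappa,U)=0$ holds if and only if $$\kappa^2=\kappa_t^2:=\frac{\sqrt{13}-2}{3}\qquad\text{and}\qquad U=U_t:=\frac{2(\kappa_t^2+1)}{\kappa_t^2-1}\ (\approx-6.61).$$ Moreover $C(\kappa_t,U_t)>0$.
   Context: $A,B,C$ are the Landau coefficients (on resonance, $\omega_a=\omega_c=1$) in the expansion $\delta(n)=An+Bn^2+Cn^3+O(n^4)$ of the reduced pump distance to threshold $\delta=4\lambda^2-(1+\kappa^2)$ as a function of the photon number $n=|\alpha|^2$ along superradiant steady states of the mean-field dissipative quantum Rabi model with Kerr nonlinearity $U=2KN/\omega_c$ and cavity decay rate $\kappa$ (in units of $\omega_c$). The point $A=B=0$ is the tricritical point. *)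

theory Defs
  imports Complex_Main
begin

definition coefA :: "real \<Rightarrow> real \<Rightarrow> real" where
  "coefA \<kappa> U = 2 * (1 + \<kappa>^2) - U * (\<kappa>^2 - 1)"

definition coefB :: "real \<Rightarrow> real \<Rightarrow> real" where
  "coefB \<kappa> U = \<kappa>^2 * U^2 + 4 * U + 2 * (1 + \<kappa>^2)"

definition coefC :: "real \<Rightarrow> real \<Rightarrow> real" where
  "coefC \<kappa> U = - (\<kappa>^2 * U^3) + 2 * U^2 + (2 * \<kappa>^2 + 6) * U"

definition Uc :: "real \<Rightarrow> real" where
  "Uc \<kappa> = 2 * (\<kappa>^2 + 1) / (\<kappa>^2 - 1)"

definition kappa_t_sq :: real where
  "kappa_t_sq = (sqrt 13 - 2) / 3"

definition kappa_t :: real where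
  "kappa_t = sqrt kappa_t_sq"

definition U_t :: real where
  "U_t = 2 * (kappa_t_sq + 1) / (kappa_t_sq - 1)"

end

theory Submission
  imports Defs
begin

lemma kt_facts: "3 * kappa_t_sq^2 + 4 * kappa_t_sq - 3 = 0" "kappa_t_sq > 1/3" "kappa_t_sq < 2/3"
proof -
  have s2: "(sqrt 13)^2 = (13::real)" by simp
  have a: "sqrt 13 > (3::real)" by (rule real_less_rsqrt) simp
  have b: "sqrt 13 < (4::real)" by (rule real_less_lsqrt) auto
  show "3 * kappa_t_sq^2 + 4 * kappa_t_sq - 3 = 0" unfolding kappa_t_sq_def
    using s2 by (simp add: power2_eq_square field_simps)
  show "kappa_t_sq > 1/3" "kappa_t_sq < 2/3" unfolding kappa_t_sq_def using a b by auto
qed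

lemma A_iff: "coefA k U = 0 \<longleftrightarrow> k^2 \<noteq> 1 \<and> U = Uc k"
  unfolding coefA_def Uc_def
  by (cases "k^2 = 1") (auto simp: field_simps)

lemma B_sub:
  fixes x :: real
  assumes "x \<noteq> 1" "x \<ge> 0"
  shows "x * (2*(x+1)/(x-1))^2 + 4*(2*(x+1)/(x-1)) + 2*(1+x) = 0 \<longleftrightarrow> 3*x^2+4*x-3 = 0"
proof -
  have d: "x - 1 \<noteq> 0" using assms(1) by simp
  define y where "y = 2*(x+1)/(x-1)"
  have hy: "y*(x-1) = 2*(x+1)" using d unfolding y_def by simp
  have "(x * y^2 + 4*y + 2*(1+x)) * (x-1)^2 = x*(y*(x-1))^2 + 4*(y*(x-1))*(x-1) + 2*(1+x)*(x-1)^2"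
    by (simp add: algebra_simps power2_eq_square)
  also have "\<dots> = 2*(x+1)*(3*x^2+4*x-3)" unfolding hy by (simp add: algebra_simps power2_eq_square)
  finally have e: "(x * y^2 + 4*y + 2*(1+x)) * (x-1)^2 = 2*(x+1)*(3*x^2+4*x-3)" .
  have "2*(x+1) \<noteq> 0" using assms by simp
  moreover have "(x-1)^2 \<noteq> 0" using d by simp
  ultimately show ?thesis unfolding y_def[symmetric] using e
    by (metis mult_eq_0_iff)
qed

lemma quad_root:
  assumes "x \<ge> 0" "3*x^2+4*x-3 = 0" shows "x = kappa_t_sq"
proof -
  have k: "3 * kappa_t_sq^2 + 4 * kappa_t_sq - 3 = 0" "kappa_t_sq > 1/3" using kt_facts by auto
  have "(x - kappa_t_sq) * (3*(x + kappa_t_sq) + 4) = 0"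
    using assms k by (simp add: algebra_simps power2_eq_square)
  moreover have "3*(x + kappa_t_sq) + 4 > 0" using assms k by simp
  ultimately show ?thesis by simp
qed

theorem mainTheorem6:
  shows "(\<forall>\<kappa> U::real. \<kappa> \<ge> 0 \<longrightarrow>
            ((coefA \<kappa> U = 0 \<longleftrightarrow> \<kappa> \<noteq> 1 \<and> U = Uc \<kappa>) \<and>
             (coefA \<kappa> U = 0 \<and> coefB \<kappa> U = 0 \<longleftrightarrow> \<kappa>^2 = kappa_t_sq \<and> U = U_t)))
         \<and> coefC kappa_t U_t > 0"
proof (intro conjI allI impI)
  have kf: "3 * kappa_t_sq^2 + 4 * kappa_t_sq - 3 = 0" "kappa_t_sq > 1/3" "kappa_t_sq < 2/3"
    using kt_facts by auto
  fix k U :: real assume k0: "k \<ge> 0"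
  have k1: "k^2 = 1 \<longleftrightarrow> k = 1" using k0
    by (smt (verit) power2_eq_1_iff)
  show "coefA k U = 0 \<longleftrightarrow> k \<noteq> 1 \<and> U = Uc k" using A_iff k1 by auto
  show "coefA k U = 0 \<and> coefB k U = 0 \<longleftrightarrow> k^2 = kappa_t_sq \<and> U = U_t"
  proof
    assume h: "coefA k U = 0 \<and> coefB k U = 0"
    then have a: "k^2 \<noteq> 1" "U = 2*(k^2+1)/(k^2-1)" using A_iff Uc_def by auto
    have "k^2 * U^2 + 4*U + 2*(1+k^2) = 0" using h coefB_def by auto
    then have "3*(k^2)^2+4*k^2-3 = 0" using B_sub[of "k^2"] a by auto
    then have "k^2 = kappa_t_sq" using quad_root[of "k^2"] by auto
    then show "k^2 = kappa_t_sq \<and> U = U_t" using a U_t_def by simp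
  next
    assume h: "k^2 = kappa_t_sq \<and> U = U_t"
    have ne: "k^2 \<noteq> 1" using h kf by auto
    have "coefA k U = 0" using A_iff ne h Uc_def U_t_def by simp
    moreover have "coefB k U = 0"
    proof -
      have "3*(k^2)^2+4*k^2-3 = 0" using h kf by simp
      then have "k^2 * (2*(k^2+1)/(k^2-1))^2 + 4*(2*(k^2+1)/(k^2-1)) + 2*(1+k^2) = 0"
        using B_sub[of "k^2"] ne by auto
      moreover have eq: "U = 2*(k^2+1)/(k^2-1)" using h U_t_def by simp
      ultimately show ?thesis unfolding coefB_def by (simp only: eq)
    qed
    ultimately show "coefA k U = 0 \<and> coefB k U = 0" by simp
  qed
next
  have kf: "3 * kappa_t_sq^2 + 4 * kappa_t_sq - 3 = 0" "kappa_t_sq > 1/3" "kappa_t_sq < 2/3"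
    using kt_facts by auto
  define x where "x = kappa_t_sq"
  have kt2: "kappa_t^2 = x" unfolding kappa_t_def x_def using kf by simp
  have B0: "x * U_t^2 + 4*U_t + 2*(1+x) = 0"
    using B_sub[of x] kf unfolding x_def U_t_def by auto
  have Uneg: "U_t < -(2*x+4)/3"
  proof -
    have "x - 1 < 0" using kf x_def by simp
    moreover have "6*(x+1) > (2*x+4)*(1-x)" using kf x_def by (simp add: algebra_simps power2_eq_square)
    ultimately show ?thesis unfolding U_t_def x_def[symmetric]
      by (simp add: field_simps)
  qed
  have "coefC kappa_t U_t = U_t * (6*U_t + 4*x + 8)"
  proof -
    have "coefC kappa_t U_t = U_t * (6*U_t + 4*x + 8) - U_t * (x * U_t^2 + 4*U_t + 2*(1+x))"
      unfolding coefC_def kt2 by (simp add: algebra_simps power2_eq_square power3_eq_cube)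
    then show ?thesis using B0 by simp
  qed
  moreover have "U_t < 0" "6*U_t + 4*x + 8 < 0" using Uneg kf x_def by auto
  ultimately show "coefC kappa_t U_t > 0" by (simp add: mult_neg_neg)
qed

end
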